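(* For every integer $m\ge1$, $$\sum_{i=0}^{\lfloor (m-1)/2\rfloor}(-1)^i\binom{2m}{m-1-2i}=\sum_{k=0}^{m-1}2^{m-1-k}\binom{2k}{k}.$$ *)

theory Defs
  imports Main
begin

end

theory Submission
  imports Defs
begin

definition b :: "nat \<Rightarrow> int \<Rightarrow> int" where
  "b n k = (if k < 0 then 0 else int (n choose nat k))"

lemma b_Suc: "b (Suc n) k = b n k + b n (k - 1)"
proof (cases "k < 0")
  case True thus ?thesis by (simp add: b_def)
next
  case False
  show ?thesis
  proof (cases "k = 0")
    case True thus ?thesis by (simp add: b_def)
  next
    case False
    have j: "nat k = Suc (nat (k - 1))" using \<open>\<not> k < 0\<close> False by arith
    thus ?thesis using \<open>\<not> k < 0\<close> False by (simp add: b_def)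
  qed
qed

lemma b_SS: "b (Suc (Suc n)) k = b n k + 2 * b n (k - 1) + b n (k - 2)"
  by (simp add: b_Suc algebra_simps)

lemma telescope:
  fixes c :: "nat \<Rightarrow> int"
  shows "(\<Sum>i<N. (-1)^i * (c i + c (Suc i))) = c 0 - (-1)^N * c N"
  by (induction N) (auto simp: algebra_simps)

definition F :: "nat \<Rightarrow> nat \<Rightarrow> int" where
  "F m N = (\<Sum>i<N. (-1)^i * b (2*m) (int m - 1 - 2 * int i))"

lemma F_indep:
  assumes "N \<ge> m" shows "F m N = F m m"
  unfolding F_def
  by (rule sum.mono_neutral_right) (use assms in \<open>auto simp: b_def\<close>)

lemma F_rec:
  assumes "N \<ge> Suc m"
  shows "F (Suc m) N = 2 * F m N + int ((2*m) choose m)"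
proof -
  define c where "c i = b (2*m) (int m - 2 * int i)" for i
  have "F (Suc m) N = (\<Sum>i<N. (-1)^i * (c i + c (Suc i)) + 2 * ((-1)^i * b (2*m) (int m - 1 - 2 * int i)))"
    unfolding F_def
  proof (rule sum.cong[OF refl])
    fix i
    have "2 * Suc m = Suc (Suc (2*m))" by simp
    hence "b (2 * Suc m) (int (Suc m) - 1 - 2 * int i)
        = b (2*m) (int m - 2 * int i) + 2 * b (2*m) (int m - 2 * int i - 1) + b (2*m) (int m - 2 * int i - 2)"
      using b_SS by (simp add: algebra_simps)
    moreover have "c (Suc i) = b (2*m) (int m - 2 * int i - 2)" by (simp add: c_def algebra_simps)
    moreover have "int m - 2 * int i - 1 = int m - 1 - 2 * int i" by simp
    ultimately show "(-1)^i * b (2 * Suc m) (int (Suc m) - 1 - 2 * int i)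
        = (-1)^i * (c i + c (Suc i)) + 2 * ((-1)^i * b (2*m) (int m - 1 - 2 * int i))"
      by (simp add: c_def algebra_simps)
  qed
  also have "\<dots> = c 0 - (-1)^N * c N + 2 * F m N"
    by (simp add: sum.distrib telescope F_def sum_distrib_left)
  also have "c N = 0" using assms by (simp add: c_def b_def)
  also have "c 0 = int ((2*m) choose m)" by (simp add: c_def b_def)
  finally show ?thesis by simp
qed

definition R :: "nat \<Rightarrow> int" where
  "R m = (\<Sum>k<m. (2::int) ^ (m - 1 - k) * int ((2*k) choose k))"

lemma R_rec: "R (Suc m) = 2 * R m + int ((2*m) choose m)"
proof -
  have "R (Suc m) = (\<Sum>k<m. (2::int) ^ (m - k) * int ((2*k) choose k)) + int ((2*m) choose m)"
    by (simp add: R_def)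
  also have "(\<Sum>k<m. (2::int) ^ (m - k) * int ((2*k) choose k)) = 2 * R m"
    unfolding R_def sum_distrib_left
  proof (rule sum.cong[OF refl])
    fix k assume "k \<in> {..<m}"
    hence "m - k = Suc (m - 1 - k)" by auto
    thus "(2::int) ^ (m - k) * int ((2*k) choose k) = 2 * (2 ^ (m - 1 - k) * int ((2*k) choose k))"
      by simp
  qed
  finally show ?thesis .
qed

lemma F_R: "F m m = R m"
proof (induction m)
  case 0 thus ?case by (simp add: F_def R_def)
next
  case (Suc m)
  have "F (Suc m) (Suc m) = 2 * F m (Suc m) + int ((2*m) choose m)" by (rule F_rec) simp
  also have "F m (Suc m) = F m m" by (rule F_indep) simp
  finally show ?case using Suc R_rec by simp
qed

theorem mainTheorem8:
  fixes m :: nat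
  assumes "m \<ge> 1"
  shows "(\<Sum>i=0..(m - 1) div 2. (-1::int) ^ i * int ((2*m) choose (m - 1 - 2*i)))
       = (\<Sum>k=0..m - 1. (2::int) ^ (m - 1 - k) * int ((2*k) choose k))"
proof -
  have "(\<Sum>i=0..(m - 1) div 2. (-1::int) ^ i * int ((2*m) choose (m - 1 - 2*i)))
      = (\<Sum>i=0..(m - 1) div 2. (-1::int) ^ i * b (2*m) (int m - 1 - 2 * int i))"
  proof (rule sum.cong[OF refl])
    fix i assume "i \<in> {0..(m - 1) div 2}"
    hence "2 * i \<le> m - 1" by auto
    hence "nat (int m - 1 - 2 * int i) = m - 1 - 2*i" and "\<not> int m - 1 - 2 * int i < 0"
      using assms by auto
    thus "(-1::int) ^ i * int ((2*m) choose (m - 1 - 2*i)) = (-1::int) ^ i * b (2*m) (int m - 1 - 2 * int i)"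
      by (simp add: b_def)
  qed
  also have "\<dots> = F m m"
    unfolding F_def
  proof (rule sum.mono_neutral_left)
    show "{0..(m - 1) div 2} \<subseteq> {..<m}" using assms by auto
  next
    show "\<forall>i\<in>{..<m} - {0..(m - 1) div 2}. (-1::int) ^ i * b (2*m) (int m - 1 - 2 * int i) = 0"
      by (auto simp: b_def)
  qed simp
  also have "\<dots> = R m" by (rule F_R)
  also have "R m = (\<Sum>k=0..m - 1. (2::int) ^ (m - 1 - k) * int ((2*k) choose k))"
    unfolding R_def using assms by (intro sum.cong) auto
  finally show ?thesis .
qed

end
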